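(* For all CQs $q,q'$ and collections of labeled examples $E=(E^+,E^-)$ (all of the same arity $k$): (1) $q'$ is a $\preceq^{\mathrm{cod}}$-generalization for $(q,E)$ if and only if $q'$ is a most-specific fitting CQ for $(E^+\cup\{e_q\},E^-)$; (2) $q$ is a most-specific fitting CQ for $E$ if and only if $q$ is a $\preceq^{\mathrm{cod}}$-generalization for $(q_\bot,E)$, where, for the relevant schema $\mathcal S=\{R_1,\dots,R_n\}$, $q_\bot$ is the $k$-ary CQ $q_\bot(x,\dots,x)\text{ :- }R_1(x,\dots,x),\dots,R_n(x,\dots,x)$.
   Context: A data example of arity $k$ is a pair $(I,\mathbf a)$ with $I$ a finite database instance and $\mathbf a$ a $k$-tuple of values of $I$. A $k$-ary CQ is $q(x_1,\dots,x_k)\text{ :- }\alpha_1,\dots,\alpha_n$ (relational atoms without constants; answer variables may repeat and each occurs in some atom). $[\![q]\!]$ denotes the set of data examples $(I,\mathbf a)$ with $\mathbf a\in q(I)$; $q_1\subseteq q_2$ is query containment, $\equiv$ equivalence. $E=(E^+,E^-)$ is a pair of sets of data examples; $q$ fits $E$ if $E^+\subseteq[\![q]\!]$ and $E^-\cap[\![q]\!]=\emptyset$. The canonical example $e_q$ of $q(x_1,\dots,x_k)$ is $(I_q,(x_1,\dots,x_k))$ where $I_q$ consists of the atoms of $q$ viewed as facts over the variables. Candidate queries are CQs over the relation symbols occurring in the input. $q_1\preceq^{\mathrm{cod}}_q q_2$ iff $[\![q]\!]\oplus[\![q_1]\!]\subseteq[\![q]\!]\oplus[\![q_2]\!]$ ($\oplus$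 = symmetric difference); $q_1\prec_q q_2$ iff $q_1\preceq_q q_2$ and not $q_2\preceq_q q_1$. A $\preceq^{\mathrm{cod}}$-generalization for $(q,E)$ is a CQ $q'$ that fits $E$ with $q\subseteq q'$ such that there is no CQ $q''$ fitting $E$ with $q\subseteq q''$ and $q''\prec^{\mathrm{cod}}_q q'$. A most-specific fitting CQ for $E$ is a CQ $q$ that fits $E$ such that $q\subseteq q'$ for every CQ $q'$ that fits $E$. *)

theory Defs
  imports Main
begin

text \<open>Values of database instances and variables of CQs are both
  natural numbers (a countably infinite domain), so that the canonical example of a
  CQ is itself a data example.\<close>

type_synonym 'r fact = "'r \<times> nat list"
type_synonym 'r inst = "'r fact set"
type_synonym 'r example = "'r inst \<times> nat list"
type_synonym 'r cq = "nat list \<times> 'r fact set"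

definition wf_inst :: "('r \<Rightarrow> nat) \<Rightarrow> 'r inst \<Rightarrow> bool" where
  "wf_inst ar I \<longleftrightarrow> finite I \<and> (\<forall>(R, vs) \<in> I. length vs = ar R)"

definition adom :: "'r inst \<Rightarrow> nat set" where
  "adom I = (\<Union>(R, vs) \<in> I. set vs)"

definition over_schema :: "'r set \<Rightarrow> 'r inst \<Rightarrow> bool" where
  "over_schema S I \<longleftrightarrow> (\<forall>(R, vs) \<in> I. R \<in> S)"

definition data_example :: "('r \<Rightarrow> nat) \<Rightarrow> nat \<Rightarrow> 'r example \<Rightarrow> bool" where
  "data_example ar k e \<longleftrightarrow> wf_inst ar (fst e) \<and> length (snd e) = k \<and> set (snd e) \<subseteq> adom (fst e)"

definition is_cq :: "('r \<Rightarrow> nat) \<Rightarrow> 'r set \<Rightarrow> nat \<Rightarrow> 'r cq \<Rightarrow> bool" where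
  "is_cq ar S k q \<longleftrightarrow> length (fst q) = k \<and> wf_inst ar (snd q) \<and> over_schema S (snd q)
     \<and> set (fst q) \<subseteq> adom (snd q)"

definition answers :: "'r cq \<Rightarrow> 'r inst \<Rightarrow> nat list set" where
  "answers q I = {map h (fst q) | h. \<forall>(R, vs) \<in> snd q. (R, map h vs) \<in> I}"

definition den :: "('r \<Rightarrow> nat) \<Rightarrow> 'r cq \<Rightarrow> 'r example set" where
  "den ar q = {e. data_example ar (length (fst q)) e \<and> snd e \<in> answers q (fst e)}"

definition contained :: "('r \<Rightarrow> nat) \<Rightarrow> 'r cq \<Rightarrow> 'r cq \<Rightarrow> bool" where
  "contained ar q1 q2 \<longleftrightarrow> den ar q1 \<subseteq> den ar q2"

definition canonical_example :: "'r cq \<Rightarrow> 'r example" where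
  "canonical_example q = (snd q, fst q)"

definition fits :: "('r \<Rightarrow> nat) \<Rightarrow> 'r example set \<times> 'r example set \<Rightarrow> 'r cq \<Rightarrow> bool" where
  "fits ar E q \<longleftrightarrow> fst E \<subseteq> den ar q \<and> snd E \<inter> den ar q = {}"

definition symdiff :: "'a set \<Rightarrow> 'a set \<Rightarrow> 'a set" where
  "symdiff A B = (A - B) \<union> (B - A)"

definition cod_le :: "('r \<Rightarrow> nat) \<Rightarrow> 'r cq \<Rightarrow> 'r cq \<Rightarrow> 'r cq \<Rightarrow> bool" where
  "cod_le ar q q1 q2 \<longleftrightarrow> symdiff (den ar q) (den ar q1) \<subseteq> symdiff (den ar q) (den ar q2)"

definition cod_less :: "('r \<Rightarrow> nat) \<Rightarrow> 'r cq \<Rightarrow> 'r cq \<Rightarrow> 'r cq \<Rightarrow> bool" where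
  "cod_less ar q q1 q2 \<longleftrightarrow> cod_le ar q q1 q2 \<and> \<not> cod_le ar q q2 q1"

definition cod_generalization ::
  "('r \<Rightarrow> nat) \<Rightarrow> 'r set \<Rightarrow> nat \<Rightarrow> 'r cq \<Rightarrow> 'r example set \<times> 'r example set \<Rightarrow> 'r cq \<Rightarrow> bool" where
  "cod_generalization ar S k q E q' \<longleftrightarrow>
     is_cq ar S k q' \<and> fits ar E q' \<and> contained ar q q' \<and>
     \<not> (\<exists>q''. is_cq ar S k q'' \<and> fits ar E q'' \<and> contained ar q q'' \<and> cod_less ar q q'' q')"

definition most_specific_fitting ::
  "('r \<Rightarrow> nat) \<Rightarrow> 'r set \<Rightarrow> nat \<Rightarrow> 'r example set \<times> 'r example set \<Rightarrow> 'r cq \<Rightarrow> bool" where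
  "most_specific_fitting ar S k E q \<longleftrightarrow>
     is_cq ar S k q \<and> fits ar E q \<and> (\<forall>q'. is_cq ar S k q' \<and> fits ar E q' \<longrightarrow> contained ar q q')"

definition q_bot :: "('r \<Rightarrow> nat) \<Rightarrow> 'r set \<Rightarrow> nat \<Rightarrow> 'r cq" where
  "q_bot ar S k = (replicate k 0, (\<lambda>R. (R, replicate (ar R) 0)) ` S)"

end

theory Submission
  imports Defs
begin

lemma canon_in_den:
  assumes "is_cq ar S k q"
  shows "canonical_example q \<in> den ar q"
proof -
  have "fst q \<in> answers q (snd q)"
    unfolding answers_def by (rule CollectI, rule exI[of _ id]) auto
  then show ?thesis using assms
    unfolding den_def canonical_example_def data_example_def is_cq_def by auto
qed

lemma contained_iff_canon:
  assumes q: "is_cq ar S k q" and p: "is_cq ar S k p"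
  shows "contained ar q p \<longleftrightarrow> canonical_example q \<in> den ar p"
proof
  assume "contained ar q p" then show "canonical_example q \<in> den ar p"
    using canon_in_den[OF q] unfolding contained_def by auto
next
  assume "canonical_example q \<in> den ar p"
  then have "fst q \<in> answers p (snd q)" unfolding den_def canonical_example_def by auto
  then obtain g where g: "map g (fst p) = fst q" "\<forall>(R, vs) \<in> snd p. (R, map g vs) \<in> snd q"
    unfolding answers_def by force
  show "contained ar q p" unfolding contained_def
  proof
    fix e assume "e \<in> den ar q"
    then obtain h where h: "data_example ar (length (fst q)) e" "snd e = map h (fst q)"
      "\<forall>(R, vs) \<in> snd q. (R, map h vs) \<in> fst e"
      unfolding den_def answers_def by auto
    have "snd e = map (h \<circ> g) (fst p)" using h(2) g(1) by (metis map_map)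
    moreover have "\<forall>(R, vs) \<in> snd p. (R, map (h \<circ> g) vs) \<in> fst e"
      using g(2) h(3) by fastforce
    moreover have "length (fst p) = length (fst q)" using q p unfolding is_cq_def by simp
    ultimately have "snd e \<in> answers p (fst e)"
      unfolding answers_def by (intro CollectI exI[of _ "h \<circ> g"]) simp
    then show "e \<in> den ar p" using h(1) \<open>length (fst p) = length (fst q)\<close>
      unfolding den_def by auto
  qed
qed

definition cG :: "'r cq \<Rightarrow> 'r cq \<Rightarrow> (nat \<times> nat) set" where
  "cG q1 q2 = {(2 * (fst q1 ! i), 2 * (fst q2 ! i) + 1) | i. i < length (fst q1)}"

definition cRel :: "'r cq \<Rightarrow> 'r cq \<Rightarrow> (nat \<times> nat) set" where
  "cRel q1 q2 = (cG q1 q2 \<union> (cG q1 q2)\<inverse>)\<^sup>*"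

definition crho :: "'r cq \<Rightarrow> 'r cq \<Rightarrow> nat \<Rightarrow> nat" where
  "crho q1 q2 v = (LEAST w. (v, w) \<in> cRel q1 q2)"

definition conj :: "'r cq \<Rightarrow> 'r cq \<Rightarrow> 'r cq" where
  "conj q1 q2 = (map (\<lambda>v. crho q1 q2 (2 * v)) (fst q1),
     (\<lambda>(R, vs). (R, map (\<lambda>v. crho q1 q2 (2 * v)) vs)) ` snd q1 \<union>
     (\<lambda>(R, vs). (R, map (\<lambda>v. crho q1 q2 (2 * v + 1)) vs)) ` snd q2)"

lemma cRel_sym: "(v, w) \<in> cRel q1 q2 \<Longrightarrow> (w, v) \<in> cRel q1 q2"
  unfolding cRel_def
  by (metis converse_Un converse_converse converse_iff rtrancl_converseI sup_commute)

lemma crho_rel: "(v, crho q1 q2 v) \<in> cRel q1 q2"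
  unfolding crho_def by (rule LeastI[of _ v]) (simp add: cRel_def)

lemma crho_eq:
  assumes "(v, w) \<in> cRel q1 q2" shows "crho q1 q2 v = crho q1 q2 w"
proof -
  have "\<And>u. (v, u) \<in> cRel q1 q2 \<longleftrightarrow> (w, u) \<in> cRel q1 q2"
    using assms cRel_sym unfolding cRel_def by (meson rtrancl_trans)
  then show ?thesis unfolding crho_def by simp
qed

lemma f_resp:
  assumes "(v, w) \<in> cRel q1 q2"
    and "\<And>a b. (a, b) \<in> cG q1 q2 \<Longrightarrow> f a = f b"
  shows "f v = f w"
  using assms(1) unfolding cRel_def
proof (induction rule: rtrancl_induct)
  case base then show ?case by simp
next
  case (step y z) then show ?case using assms(2) by auto
qed

lemma conj_is_cq:
  assumes "is_cq ar S k q1" "is_cq ar S k q2"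
  shows "is_cq ar S k (conj q1 q2)"
proof -
  let ?f = "\<lambda>v. crho q1 q2 (2 * v)" and ?g = "\<lambda>v. crho q1 q2 (2 * v + 1)"
  let ?A = "(\<lambda>(R, vs). (R, map ?f vs)) ` snd q1" and ?B = "(\<lambda>(R, vs). (R, map ?g vs)) ` snd q2"
  have w1: "wf_inst ar (snd q1)" "over_schema S (snd q1)" "set (fst q1) \<subseteq> adom (snd q1)"
    "length (fst q1) = k"
    using assms(1) unfolding is_cq_def by auto
  have w2: "wf_inst ar (snd q2)" "over_schema S (snd q2)"
    using assms(2) unfolding is_cq_def by auto
  have "finite (?A \<union> ?B)" using w1(1) w2(1) unfolding wf_inst_def by simp
  moreover have "\<forall>(R, vs) \<in> ?A \<union> ?B. length vs = ar R"
    using w1(1) w2(1) unfolding wf_inst_def by auto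
  ultimately have "wf_inst ar (?A \<union> ?B)" unfolding wf_inst_def by blast
  moreover have "over_schema S (?A \<union> ?B)"
    using w1(2) w2(2) unfolding over_schema_def by auto
  moreover have "set (map ?f (fst q1)) \<subseteq> adom (?A \<union> ?B)"
  proof
    fix y assume "y \<in> set (map ?f (fst q1))"
    then obtain x where x: "x \<in> set (fst q1)" "y = ?f x" by auto
    then obtain R vs where Rv: "(R, vs) \<in> snd q1" "x \<in> set vs"
      using w1(3) unfolding adom_def by blast
    then have "(R, map ?f vs) \<in> ?A \<union> ?B" by (intro UnI1 image_eqI[where x="(R, vs)"]) auto
    moreover have "y \<in> set (map ?f vs)" using x Rv by simp
    ultimately show "y \<in> adom (?A \<union> ?B)" unfolding adom_def by blast
  qed
  ultimately show ?thesis using w1(4) unfolding is_cq_def conj_def by simp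
qed

lemma conj_den:
  assumes q1: "is_cq ar S k q1" and q2: "is_cq ar S k q2"
  shows "den ar (conj q1 q2) = den ar q1 \<inter> den ar q2"
proof (intro equalityI subsetI)
  let ?r = "crho q1 q2"
  have len: "length (fst q1) = k" "length (fst q2) = k" "length (fst (conj q1 q2)) = k"
    using q1 q2 unfolding is_cq_def conj_def by auto
  fix e assume "e \<in> den ar (conj q1 q2)"
  then obtain h where h: "data_example ar k e" "snd e = map h (fst (conj q1 q2))"
      "\<forall>(R, vs) \<in> snd (conj q1 q2). (R, map h vs) \<in> fst e"
    using len unfolding den_def answers_def by auto
  have a1: "\<forall>(R, vs) \<in> snd q1. (R, map (h \<circ> (\<lambda>v. ?r (2 * v))) vs) \<in> fst e"
    proof (clarify)
    fix R vs assume "(R, vs) \<in> snd q1"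
    then have "(R, map (\<lambda>v. ?r (2 * v)) vs) \<in> snd (conj q1 q2)" unfolding conj_def by force
    then show "(R, map (h \<circ> (\<lambda>v. ?r (2 * v))) vs) \<in> fst e" using h(3) by auto
  qed
  have a2: "\<forall>(R, vs) \<in> snd q2. (R, map (h \<circ> (\<lambda>v. ?r (2 * v + 1))) vs) \<in> fst e"
    proof (clarify)
    fix R vs assume "(R, vs) \<in> snd q2"
    then have "(R, map (\<lambda>v. ?r (2 * v + 1)) vs) \<in> snd (conj q1 q2)" unfolding conj_def by force
    then show "(R, map (h \<circ> (\<lambda>v. ?r (2 * v + 1))) vs) \<in> fst e" using h(3) by auto
  qed
  have e1: "snd e = map (h \<circ> (\<lambda>v. ?r (2 * v))) (fst q1)" using h(2) unfolding conj_def by simp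
  have "map (\<lambda>v. ?r (2 * v + 1)) (fst q2) = map (\<lambda>v. ?r (2 * v)) (fst q1)"
  proof (rule nth_equalityI)
    show "length (map (\<lambda>v. ?r (2 * v + 1)) (fst q2)) = length (map (\<lambda>v. ?r (2 * v)) (fst q1))"
      using len by simp
    fix i assume "i < length (map (\<lambda>v. ?r (2 * v + 1)) (fst q2))"
    then have i: "i < length (fst q1)" "i < length (fst q2)" using len by auto
    have "(2 * (fst q1 ! i), 2 * (fst q2 ! i) + 1) \<in> cRel q1 q2"
      unfolding cRel_def cG_def using i by blast
    then show "map (\<lambda>v. ?r (2 * v + 1)) (fst q2) ! i = map (\<lambda>v. ?r (2 * v)) (fst q1) ! i"
      using i crho_eq by fastforce
  qed
  then have e2: "snd e = map (h \<circ> (\<lambda>v. ?r (2 * v + 1))) (fst q2)"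
    using e1 by (metis map_map)
  have "snd e \<in> answers q1 (fst e)"
    unfolding answers_def using a1 e1 by (intro CollectI exI[of _ "h \<circ> (\<lambda>v. ?r (2 * v))"]) simp
  moreover have "snd e \<in> answers q2 (fst e)"
    unfolding answers_def using a2 e2 by (intro CollectI exI[of _ "h \<circ> (\<lambda>v. ?r (2 * v + 1))"]) simp
  ultimately show "e \<in> den ar q1 \<inter> den ar q2"
    using h(1) len unfolding den_def by simp
next
  let ?r = "crho q1 q2"
  have len: "length (fst q1) = k" "length (fst q2) = k" "length (fst (conj q1 q2)) = k"
    using q1 q2 unfolding is_cq_def conj_def by auto
  fix e assume "e \<in> den ar q1 \<inter> den ar q2"
  then obtain h1 h2 where h: "data_example ar k e" "snd e = map h1 (fst q1)"
      "\<forall>(R, vs) \<in> snd q1. (R, map h1 vs) \<in> fst e" "snd e = map h2 (fst q2)"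
      "\<forall>(R, vs) \<in> snd q2. (R, map h2 vs) \<in> fst e"
    using len unfolding den_def answers_def by auto
  define f where "f v = (if even v then h1 (v div 2) else h2 (v div 2))" for v
  have g: "f a = f b" if ab: "(a, b) \<in> cG q1 q2" for a b
  proof -
    obtain i where i: "i < length (fst q1)" "a = 2 * (fst q1 ! i)" "b = 2 * (fst q2 ! i) + 1"
    proof -
      from ab obtain i where i: "i < length (fst q1)"
        "(a, b) = (2 * (fst q1 ! i), 2 * (fst q2 ! i) + 1)" unfolding cG_def by blast
      then show ?thesis using that by auto
    qed
    have "h1 (fst q1 ! i) = h2 (fst q2 ! i)" using h(2) h(4) i(1) len
      by (metis nth_map)
    then show ?thesis using i unfolding f_def by simp
  qed
  have fr: "f (?r v) = f v" for v
  proof -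
    have "f v = f (?r v)" by (rule f_resp[OF crho_rel g])
    then show ?thesis by (rule sym)
  qed
  have m1: "(\<lambda>v. f (?r (2 * v))) = h1"
  proof
    fix v have "f (?r (2 * v)) = f (2 * v)" by (rule fr)
    also have "\<dots> = h1 v" unfolding f_def by simp
    finally show "f (?r (2 * v)) = h1 v" .
  qed
  have m2: "(\<lambda>v. f (?r (2 * v + 1))) = h2"
  proof
    fix v have "f (?r (2 * v + 1)) = f (2 * v + 1)" by (rule fr)
    also have "\<dots> = h2 v" unfolding f_def by simp
    finally show "f (?r (2 * v + 1)) = h2 v" .
  qed
  have "map f (fst (conj q1 q2)) = map (\<lambda>v. f (?r (2 * v))) (fst q1)"
    unfolding conj_def by simp
  then have "snd e = map f (fst (conj q1 q2))" using h(2) m1 by simp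
  moreover have "\<forall>(R, vs) \<in> snd (conj q1 q2). (R, map f vs) \<in> fst e"
  proof -
    have "\<forall>(R, vs) \<in> snd q1. (R, map f (map (\<lambda>v. ?r (2 * v)) vs)) \<in> fst e"
      using h(3) m1 by (simp add: comp_def)
    moreover have "\<forall>(R, vs) \<in> snd q2. (R, map f (map (\<lambda>v. ?r (2 * v + 1)) vs)) \<in> fst e"
      using h(5) m2 by (simp add: comp_def)
    ultimately show ?thesis unfolding conj_def by auto
  qed
  ultimately have "snd e \<in> answers (conj q1 q2) (fst e)"
    unfolding answers_def by (intro CollectI exI[of _ f]) simp
  then show "e \<in> den ar (conj q1 q2)"
    using h(1) len unfolding den_def by simp
qed

lemma gen_iff_least:
  assumes b: "is_cq ar S k b"
  shows "cod_generalization ar S k b E q' \<longleftrightarrow>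
    (is_cq ar S k q' \<and> fits ar E q' \<and> contained ar b q' \<and>
     (\<forall>p. is_cq ar S k p \<and> fits ar E p \<and> contained ar b p \<longrightarrow> contained ar q' p))"
proof -
  have le: "cod_le ar b q1 q2 \<longleftrightarrow> den ar q1 \<subseteq> den ar q2"
    if "contained ar b q1" "contained ar b q2" for q1 q2
    using that unfolding cod_le_def symdiff_def contained_def by blast
  show ?thesis
  proof
    assume A: "cod_generalization ar S k b E q'"
    then have B: "is_cq ar S k q'" "fits ar E q'" "contained ar b q'"
      and N: "\<And>q''. is_cq ar S k q'' \<Longrightarrow> fits ar E q'' \<Longrightarrow> contained ar b q''
          \<Longrightarrow> \<not> cod_less ar b q'' q'"
      unfolding cod_generalization_def by auto
    have "contained ar q' p" if p: "is_cq ar S k p" "fits ar E p" "contained ar b p" for p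
    proof -
      let ?c = "conj q' p"
      have dc: "den ar ?c = den ar q' \<inter> den ar p" using conj_den[OF B(1) p(1)] .
      have c1: "is_cq ar S k ?c" using conj_is_cq[OF B(1) p(1)] .
      have "fst E \<subseteq> den ar q'" "snd E \<inter> den ar q' = {}" "fst E \<subseteq> den ar p"
        using B(2) p(2) unfolding fits_def by auto
      then have c2: "fits ar E ?c" unfolding fits_def dc by blast
      have "den ar b \<subseteq> den ar q'" "den ar b \<subseteq> den ar p"
        using B(3) p(3) unfolding contained_def by auto
      then have c3: "contained ar b ?c" unfolding contained_def dc by blast
      have nl: "\<not> cod_less ar b ?c q'" by (rule N[OF c1 c2 c3])
      have sub: "den ar ?c \<subseteq> den ar q'" unfolding dc by blast
      have "cod_le ar b ?c q'" using le[OF c3 B(3)] sub by simp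
      then have "cod_le ar b q' ?c" using nl unfolding cod_less_def by simp
      then have "den ar q' \<subseteq> den ar ?c" using le[OF B(3) c3] by simp
      then show ?thesis unfolding contained_def dc by blast
    qed
    then show "is_cq ar S k q' \<and> fits ar E q' \<and> contained ar b q' \<and>
     (\<forall>p. is_cq ar S k p \<and> fits ar E p \<and> contained ar b p \<longrightarrow> contained ar q' p)"
      using B by blast
  next
    assume A: "is_cq ar S k q' \<and> fits ar E q' \<and> contained ar b q' \<and>
     (\<forall>p. is_cq ar S k p \<and> fits ar E p \<and> contained ar b p \<longrightarrow> contained ar q' p)"
    then have A3: "contained ar b q'" by blast
    have "\<not> cod_less ar b p q'" if p: "is_cq ar S k p" "fits ar E p" "contained ar b p" for p
    proof -
      have "contained ar q' p" using A p by blast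
      then have "cod_le ar b q' p" using le[OF A3 p(3)] unfolding contained_def by simp
      then show ?thesis unfolding cod_less_def by simp
    qed
    then show "cod_generalization ar S k b E q'" using A unfolding cod_generalization_def by blast
  qed
qed

lemma qbot_cq:
  assumes "finite S" "is_cq ar S k q"
  shows "is_cq ar S k (q_bot ar S k)"
proof -
  have "set (replicate k (0::nat)) \<subseteq> adom (snd (q_bot ar S k))"
  proof (cases "k = 0")
    case False
    then obtain x where x: "x \<in> set (fst q)" using assms(2) unfolding is_cq_def
      by (metis length_0_conv list.set_intros(1) neq_Nil_conv)
    then obtain R vs where Rv: "(R, vs) \<in> snd q" "x \<in> set vs"
      using assms(2) unfolding is_cq_def adom_def by blast
    then have "R \<in> S" "length vs = ar R" using assms(2)
      unfolding is_cq_def over_schema_def wf_inst_def by auto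
    then have "(R, replicate (ar R) 0) \<in> snd (q_bot ar S k)" unfolding q_bot_def by simp
    moreover have "0 \<in> set (replicate (ar R) (0::nat))" using Rv(2) \<open>length vs = ar R\<close>
      by (cases vs) auto
    ultimately have "0 \<in> adom (snd (q_bot ar S k))" unfolding adom_def by blast
    moreover have "set (replicate k (0::nat)) \<subseteq> {0}" by auto
    ultimately show ?thesis by blast
  qed simp
  moreover have "wf_inst ar (snd (q_bot ar S k))"
    using assms(1) unfolding q_bot_def wf_inst_def by auto
  moreover have "over_schema S (snd (q_bot ar S k))"
    unfolding q_bot_def over_schema_def by auto
  moreover have "length (fst (q_bot ar S k)) = k" unfolding q_bot_def by simp
  ultimately show ?thesis unfolding is_cq_def q_bot_def by simp
qed

lemma qbot_contained:
  assumes "finite S" "is_cq ar S k q" "is_cq ar S k p"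
  shows "contained ar (q_bot ar S k) p"
proof -
  have qb: "is_cq ar S k (q_bot ar S k)" using qbot_cq[OF assms(1,2)] .
  have "snd (canonical_example (q_bot ar S k)) \<in> answers p (fst (canonical_example (q_bot ar S k)))"
  proof -
    have "map (\<lambda>_. 0::nat) (fst p) = replicate k 0" using assms(3)
      unfolding is_cq_def by (simp add: map_replicate_const)
    moreover have "\<forall>(R, vs) \<in> snd p. (R, map (\<lambda>_. 0::nat) vs) \<in> snd (q_bot ar S k)"
    proof clarify
      fix R vs assume a: "(R, vs) \<in> snd p"
      then have "R \<in> S" "length vs = ar R" using assms(3)
        unfolding is_cq_def wf_inst_def over_schema_def by auto
      then show "(R, map (\<lambda>_. 0::nat) vs) \<in> snd (q_bot ar S k)"
        unfolding q_bot_def by (simp add: map_replicate_const)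
    qed
    ultimately have "replicate k 0 \<in> answers p (snd (q_bot ar S k))"
      unfolding answers_def by (intro CollectI exI[of _ "\<lambda>_. 0::nat"]) simp
    then show ?thesis unfolding canonical_example_def q_bot_def by simp
  qed
  moreover have "data_example ar (length (fst p)) (canonical_example (q_bot ar S k))"
    using qb assms(3) unfolding data_example_def is_cq_def canonical_example_def by simp
  ultimately have "canonical_example (q_bot ar S k) \<in> den ar p"
    unfolding den_def by simp
  then show ?thesis using contained_iff_canon[OF qb assms(3)] by simp
qed

theorem theorem8:
  fixes ar :: "'r \<Rightarrow> nat" and S :: "'r set" and k :: nat
    and q q' :: "'r cq" and Epos Eneg :: "'r example set"
  assumes "finite S"
    and "is_cq ar S k q" and "is_cq ar S k q'"
    and "\<forall>e \<in> Epos \<union> Eneg. data_example ar k e \<and> over_schema S (fst e)"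
  shows "(cod_generalization ar S k q (Epos, Eneg) q' \<longleftrightarrow>
            most_specific_fitting ar S k (Epos \<union> {canonical_example q}, Eneg) q')
       \<and> (most_specific_fitting ar S k (Epos, Eneg) q \<longleftrightarrow>
            cod_generalization ar S k (q_bot ar S k) (Epos, Eneg) q)"
proof
  have fe: "(is_cq ar S k p \<and> fits ar (Epos \<union> {canonical_example q}, Eneg) p) \<longleftrightarrow>
      (is_cq ar S k p \<and> fits ar (Epos, Eneg) p \<and> contained ar q p)" for p
  proof (cases "is_cq ar S k p")
    case True
    then show ?thesis using contained_iff_canon[OF assms(2) True] unfolding fits_def by auto
  qed simp
  show "cod_generalization ar S k q (Epos, Eneg) q' \<longleftrightarrow>
            most_specific_fitting ar S k (Epos \<union> {canonical_example q}, Eneg) q'"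
    unfolding gen_iff_least[OF assms(2)] most_specific_fitting_def conj_assoc[symmetric] fe
    by simp
next
  have fe2: "(is_cq ar S k p \<and> fits ar (Epos, Eneg) p \<and> contained ar (q_bot ar S k) p) \<longleftrightarrow>
      (is_cq ar S k p \<and> fits ar (Epos, Eneg) p)" for p
    using qbot_contained[OF assms(1,2), of p] by blast
  have "contained ar (q_bot ar S k) q" using qbot_contained[OF assms(1,2,2)] .
  then show "most_specific_fitting ar S k (Epos, Eneg) q \<longleftrightarrow>
            cod_generalization ar S k (q_bot ar S k) (Epos, Eneg) q"
    unfolding gen_iff_least[OF qbot_cq[OF assms(1,2)]] most_specific_fitting_def fe2
    by simp
qed

end
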